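(* Let $A>0$, $\beta\in(0,1)$, $\pi_0,\pi_1\in[0,1]$, and integers $n_{te}\ge1$, $n_0,n_1\ge1$, $0\le k_0\le n_0$, $0\le k_1\le n_1$. Let $y_{10},\dots,y_{n_{te}0},y_{11},\dots,y_{n_{te}1}$ be $2n_{te}$ independent $[0,1]$-valued random variables with, for all $x\in(0,1)$, $$P(y_{i0}\le x)=\sum_{j=n_0-k_0+1}^{n_0}\binom{n_0}{j}x^j(1-x)^{n_0-j},\qquad P(y_{i1}\le x)=\sum_{j=k_1+1}^{n_1}\binom{n_1}{j}x^j(1-x)^{n_1-j}.$$ Let $C$ be a random variable with $C\le A\sum_{i=1}^{n_{te}}(\beta\pi_0 y_{i0}+\pi_1 y_{i1})$ almost surely. Define $$C^*=n_{te}A\Big[\beta\pi_0\frac{n_0-k_0+1}{n_0+1}+\pi_1\frac{k_1+1}{n_1+1}\Big],$$ $$M=\max\Big\{\pi_1A\max\Big(\tfrac{k_1+1}{n_1+1},1-\tfrac{k_1+1}{n_1+1}\Big),\ \beta\pi_0A\max\Big(\tfrac{n_0-k_0+1}{n_0+1},1-\tfrac{n_0-k_0+1}{n_0+1}\Big)\Big\},$$ $$\sigma^2=n_{te}A^2\Big[\pi_1^2\frac{(k_1+1)(n_1-k_1)}{(n_1+1)^2(n_1+2)}+(\beta\pi_0)^2\frac{k_0(n_0-k_0+1)}{(n_0+1)^2(n_0+2)}\Big],$$ and assume $\sigma>0$. Then for every $t>0$, $$P(C\le C^*+t\sigma)\ge 1-\exp\Big\{-\frac{t^2}{2+\frac{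2M}{3\sigma}t}\Big\}.$$
   Context: Here $A=C(1,0)$ is the cost of a false negative, $\beta=C(0,1)/C(1,0)$, $\pi_0,\pi_1$ are the population class probabilities, and $n_{te}$ is the number of test instances. In the paper $y_{i0}$ and $y_{i1}$ model the upper bounds $1-F_0(T^0_{(k_0)})$ and $F_1(T^1_{(k_1+1)})$ on the false positive and false negative rates of test instance $i$ under the THORS threshold (with $F_j$ the continuous class-conditional score distribution functions and $T^j_{(i)}$ the class-$j$ validation order statistics), and $C=\sum_{i=1}^{n_{te}}A(\beta\pi_0\alpha_{i0}+\pi_1\alpha_{i1})$ is the expected misclassification cost on the test instances; the statement above makes explicit the independence across test instances used in the argument. *)

theory Defs
  imports "HOL-Probability.Probability"
begin

text \<open>CDF of the order-statistic bound: P(Beta <= x) written as a binomial tail,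
  sum over j = lo..n of (n choose j) x^j (1-x)^(n-j).\<close>
definition binom_tail :: "nat \<Rightarrow> nat \<Rightarrow> real \<Rightarrow> real" where
  "binom_tail n lo x = (\<Sum>j=lo..n. real (n choose j) * x ^ j * (1 - x) ^ (n - j))"

definition thors_Cstar :: "nat \<Rightarrow> real \<Rightarrow> real \<Rightarrow> real \<Rightarrow> real \<Rightarrow> nat \<Rightarrow> nat \<Rightarrow> nat \<Rightarrow> nat \<Rightarrow> real" where
  "thors_Cstar nte A \<beta> \<pi>0 \<pi>1 n0 n1 k0 k1 =
     real nte * A * (\<beta> * \<pi>0 * (real n0 - real k0 + 1) / (real n0 + 1)
                     + \<pi>1 * (real k1 + 1) / (real n1 + 1))"

definition thors_M :: "real \<Rightarrow> real \<Rightarrow> real \<Rightarrow> real \<Rightarrow> nat \<Rightarrow> nat \<Rightarrow> nat \<Rightarrow> nat \<Rightarrow> real" where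
  "thors_M A \<beta> \<pi>0 \<pi>1 n0 n1 k0 k1 =
     max (\<pi>1 * A * max ((real k1 + 1) / (real n1 + 1)) (1 - (real k1 + 1) / (real n1 + 1)))
         (\<beta> * \<pi>0 * A * max ((real n0 - real k0 + 1) / (real n0 + 1))
                              (1 - (real n0 - real k0 + 1) / (real n0 + 1)))"

definition thors_sigma2 :: "nat \<Rightarrow> real \<Rightarrow> real \<Rightarrow> real \<Rightarrow> real \<Rightarrow> nat \<Rightarrow> nat \<Rightarrow> nat \<Rightarrow> nat \<Rightarrow> real" where
  "thors_sigma2 nte A \<beta> \<pi>0 \<pi>1 n0 n1 k0 k1 =
     real nte * A\<^sup>2 * (\<pi>1\<^sup>2 * ((real k1 + 1) * (real n1 - real k1))
                          / ((real n1 + 1)\<^sup>2 * (real n1 + 2))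
                     + (\<beta> * \<pi>0)\<^sup>2 * (real k0 * (real n0 - real k0 + 1))
                          / ((real n0 + 1)\<^sup>2 * (real n0 + 2)))"

end

theory Submission imports Defs "HOL-Analysis.Gamma_Function" begin


lemma fact_ge_geom: "2 * 3 ^ n \<le> (fact (n + 2) :: real)"
proof (induction n)
  case 0 then show ?case by simp
next
  case (Suc n)
  have "fact (Suc n + 2) = real (n + 3) * (fact (n + 2) :: real)"
    by (simp add: algebra_simps)
  also have "\<dots> \<ge> 3 * fact (n+2)" by (intro mult_right_mono) auto
  moreover have "2 * 3 ^ Suc n = 3 * (2 * (3::real) ^ n)" by simp
  ultimately show ?case using Suc by linarith
qed

lemma exp_le_quad_neg:
  fixes u :: real assumes "u \<le> 0" shows "exp u \<le> 1 + u + u^2/2"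
proof -
  define f where "f = (\<lambda>u::real. 1 + u + u^2/2 - exp u)"
  have d: "\<And>x. (f has_real_derivative (1 + x - exp x)) (at x)"
    unfolding f_def by (auto intro!: derivative_eq_intros simp: power2_eq_square)
  have "f 0 \<le> f u"
    using DERIV_nonpos_imp_nonincreasing[of u 0 f] assms d
    by (metis exp_ge_add_one_self diff_le_0_iff_le)
  then show ?thesis by (simp add: f_def)
qed

lemma exp_le_quad_pos:
  fixes u :: real assumes "0 \<le> u" "u < 3" shows "exp u \<le> 1 + u + u^2/(2*(1 - u/3))"
proof -
  have s: "summable (\<lambda>n. u^n / fact n)" using summable_exp[of u] by (simp add: field_simps)
  have e: "exp u = (\<Sum>n. u^n / fact n)" by (simp add: exp_def inverse_eq_divide field_simps)
  have s2: "summable (\<lambda>n. u^(n+2) / fact (n+2))"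
    using s by (subst summable_iff_shift[where k=2]) 
  have "(\<Sum>n. u^n / fact n) = (\<Sum>n. u^(n+2) / fact (n+2)) + (\<Sum>n<2. u^n / fact n)"
    using suminf_split_initial_segment[OF s, of 2] by simp
  also have "(\<Sum>n<2. u^n / fact n) = 1 + u" by (simp add: numeral_2_eq_2)
  finally have e2: "exp u = (\<Sum>n. u^(n+2) / fact (n+2)) + 1 + u" using e by simp
  have g: "(\<lambda>n. (u/3)^n) sums (1 / (1 - u/3))"
    using geometric_sums[of "u/3"] assms by simp
  have g2: "(\<lambda>n. u^2/2 * (u/3)^n) sums (u^2/2 * (1 / (1 - u/3)))"
    by (rule sums_mult[OF g])
  have le: "\<And>n. u^(n+2) / fact (n+2) \<le> u^2/2 * (u/3)^n"
  proof -
    fix n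
    have "u^(n+2) / fact (n+2) \<le> u^(n+2) / (2 * 3^n)"
      using assms fact_ge_geom[of n] by (intro divide_left_mono) auto
    also have "\<dots> = u^2/2 * (u/3)^n" by (simp add: power_add power_divide field_simps power2_eq_square)
    finally show "u^(n+2) / fact (n+2) \<le> u^2/2 * (u/3)^n" .
  qed
  have "(\<Sum>n. u^(n+2) / fact (n+2)) \<le> u^2/2 * (1 / (1 - u/3))"
    using suminf_le[OF le s2 sums_summable[OF g2]] sums_unique[OF g2] by simp
  then show ?thesis using e2 assms by (simp add: field_simps)
qed

lemma exp_le_quad:
  fixes u c :: real assumes "u \<le> c" "0 \<le> c" "c < 3"
  shows "exp u \<le> 1 + u + u^2/(2*(1 - c/3))"
proof (cases "u \<le> 0")
  case True
  have "u^2/2 \<le> u^2/(2*(1 - c/3))"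
    using assms by (intro divide_left_mono) (auto simp: field_simps)
  then show ?thesis using exp_le_quad_neg[OF True] by linarith
next
  case False
  have "u^2/(2*(1 - u/3)) \<le> u^2/(2*(1 - c/3))"
  proof (rule divide_left_mono)
    show "2*(1 - c/3) \<le> 2*(1 - u/3)" using assms by simp
    show "0 \<le> u^2" by simp
    show "0 < 2*(1 - u/3) * (2*(1 - c/3))" using assms by (intro mult_pos_pos) auto
  qed
  then show ?thesis using exp_le_quad_pos[of u] False assms by linarith
qed



lemma beta_nat:
  "((\<lambda>x::real. x^a * (1-x)^b) has_integral (fact a * fact b / fact (a+b+1))) {0<..<1}"
proof -
  have h: "((\<lambda>t. t powr (real (a+1) - 1) * (1 - t) powr (real (b+1) - 1)) has_integral
            Beta (real (a+1)) (real (b+1))) {0<..<1}"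
    using has_integral_Beta_real[of "real (a+1)" "real (b+1)"]
    by (simp add: has_integral_Icc_iff_Ioo)
  have B: "Beta (real (a+1)) (real (b+1)) = fact a * fact b / fact (a+b+1)"
    unfolding Beta_def using Gamma_fact[of a, where 'a=real] Gamma_fact[of b, where 'a=real]
      Gamma_fact[of "a+b+1", where 'a=real]
    by (simp add: add_ac)
  show ?thesis
    using h unfolding B
    by (subst has_integral_cong[where g="\<lambda>t. t powr (real (a+1) - 1) * (1 - t) powr (real (b+1) - 1)"]) (auto simp: powr_realpow)
qed

lemma aux_cancel1: "(f::real) \<noteq> 0 \<Longrightarrow> a*f/(b*(c*f)) = a/(c*b)"
  by (simp add: mult.commute)
lemma aux_cancel2: "(a::real)/d = 2*a/(2*d)"
  by simp

lemma bern_int0: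
  assumes "j \<le> n"
  shows "((\<lambda>x::real. real (n choose j) * x^j * (1-x)^(n-j)) has_integral (1 / real (n+1))) {0<..<1}"
proof -
  have "((\<lambda>x::real. real (n choose j) * (x^j * (1-x)^(n-j))) has_integral
        (real (n choose j) * (fact j * fact (n-j) / fact (j+(n-j)+1)))) {0<..<1}"
    by (intro has_integral_mult_right beta_nat)
  moreover have "real (n choose j) * (fact j * fact (n-j) / fact (j+(n-j)+1)) = 1 / real (n+1)"
  proof -
    have f: "fact j * fact (n-j) * real (n choose j) = fact n"
      using binomial_fact_lemma[OF assms] by (metis of_nat_fact of_nat_mult)
    have "j + (n-j) + 1 = Suc n" using assms by simp
    then have "real (n choose j) * (fact j * fact (n-j) / fact (j+(n-j)+1)) = fact n / fact (Suc n)"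
      using f by (simp add: ac_simps)
    also have "\<dots> = 1 / real (n+1)" by simp
    finally show ?thesis .
  qed
  ultimately show ?thesis by (simp add: mult.assoc)
qed

lemma bern_int1:
  assumes "j \<le> n"
  shows "((\<lambda>x::real. x * (real (n choose j) * x^j * (1-x)^(n-j))) has_integral
          (real (j+1) / (real (n+1) * real (n+2)))) {0<..<1}"
proof -
  have "((\<lambda>x::real. real (n choose j) * (x^(j+1) * (1-x)^(n-j))) has_integral
        (real (n choose j) * (fact (j+1) * fact (n-j) / fact ((j+1)+(n-j)+1)))) {0<..<1}"
    by (intro has_integral_mult_right beta_nat)
  moreover have "real (n choose j) * (fact (j+1) * fact (n-j) / fact ((j+1)+(n-j)+1))
                 = real (j+1) / (real (n+1) * real (n+2))"
  proof -
    have f: "fact j * fact (n-j) * real (n choose j) = fact n"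
      using binomial_fact_lemma[OF assms] by (metis of_nat_fact of_nat_mult)
    have "(j+1) + (n-j) + 1 = Suc (Suc n)" using assms by simp
    then have "real (n choose j) * (fact (j+1) * fact (n-j) / fact ((j+1)+(n-j)+1))
        = real (j+1) * (fact j * fact (n-j) * real (n choose j)) / fact (Suc (Suc n))"
      by (simp add: ac_simps)
    also have "\<dots> = real (j+1) * fact n / (real (n+2) * (real (n+1) * fact n))"
      unfolding f by (simp add: ac_simps)
    also have "\<dots> = real (j+1) / (real (n+1) * real (n+2))"
      using aux_cancel1[of "fact n" "real (j+1)" "real (n+2)" "real (n+1)"] by simp
    finally show ?thesis .
  qed
  ultimately show ?thesis by (simp add: algebra_simps)
qed

lemma int_tail0:
  "((\<lambda>x. binom_tail n lo x) has_integral (real (n + 1 - lo) / real (n+1))) {0<..<1}"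
proof -
  have "((\<lambda>x. \<Sum>j=lo..n. real (n choose j) * x ^ j * (1 - x) ^ (n - j)) has_integral
         (\<Sum>j=lo..n. 1 / real (n+1))) {0<..<1}"
    by (intro has_integral_sum bern_int0) auto
  then show ?thesis by (simp add: binom_tail_def)
qed

lemma sum_lin: "(\<Sum>j=lo..<lo+d. 2 * (real j + 1)) = real (lo+d) * real (lo+d+1) - real lo * real (lo+1)"
  by (induction d) (auto simp: algebra_simps)

lemma int_tail1:
  assumes "lo \<le> n + 1"
  shows "((\<lambda>x. x * binom_tail n lo x) has_integral
     ((real (n+1) * real (n+2) - real lo * real (lo+1)) / (2 * real (n+1) * real (n+2)))) {0<..<1}"
proof -
  have "((\<lambda>x. \<Sum>j=lo..n. x * (real (n choose j) * x ^ j * (1 - x) ^ (n - j))) has_integral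
         (\<Sum>j=lo..n. real (j+1) / (real (n+1) * real (n+2)))) {0<..<1}"
    by (intro has_integral_sum bern_int1) auto
  moreover have "(\<Sum>j=lo..n. real (j+1) / (real (n+1) * real (n+2))) =
      (\<Sum>j=lo..<lo+(n+1-lo). 2 * (real j + 1)) / (2 * real (n+1) * real (n+2))"
  proof -
    have e: "{lo..n} = {lo..<lo+(n+1-lo)}" using assms by auto
    have "(\<Sum>j=lo..n. real (j+1) / (real (n+1) * real (n+2))) =
          (\<Sum>j=lo..n. 2 * (real j + 1) / (2 * (real (n+1) * real (n+2))))"
      by (intro sum.cong refl) (metis aux_cancel2 of_nat_Suc add.commute Suc_eq_plus1)
    also have "\<dots> = (\<Sum>j=lo..n. 2 * (real j + 1)) / (2 * real (n+1) * real (n+2))"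
      by (simp only: sum_divide_distrib mult.assoc)
    finally show ?thesis unfolding e .
  qed
  moreover have "lo + (n+1-lo) = n+1" using assms by simp
  ultimately show ?thesis unfolding sum_lin binom_tail_def
    by (simp add: sum_distrib_left)
qed



lemma pow_integral:
  assumes "0 \<le> (y::real)"
  shows "((\<lambda>x. real (Suc k) * x^k) has_integral y^Suc k) {0<..<y}"
proof -
  have e: "\<And>x::real. real k * x^(k - Suc 0) * x = real k * x^k" by (case_tac k) auto
  have "((\<lambda>x. real (Suc k) * x^k) has_integral (y^Suc k - 0^Suc k)) {0..y}"
    by (rule fundamental_theorem_of_calculus[OF assms])
       (use e in \<open>auto intro!: derivative_eq_intros simp: has_real_derivative_iff_has_vector_derivative[symmetric] algebra_simps\<close>)
  then show ?thesis by (simp add: has_integral_Icc_iff_Ioo)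
qed

lemma moment_from_cdf:
  fixes Y :: "'a \<Rightarrow> real" and F :: "real \<Rightarrow> real"
  assumes P: "prob_space M" and Ym[measurable]: "Y \<in> borel_measurable M"
    and rng: "\<And>\<omega>. \<omega> \<in> space M \<Longrightarrow> 0 \<le> Y \<omega> \<and> Y \<omega> \<le> 1"
    and cdf: "\<And>x. 0 < x \<Longrightarrow> x < 1 \<Longrightarrow> measure M {\<omega>\<in>space M. Y \<omega> \<le> x} = F x"
    and I: "((\<lambda>x. real (Suc k) * x^k * (1 - F x)) has_integral I) {0<..<1}"
  shows "prob_space.expectation M (\<lambda>\<omega>. Y \<omega> ^ Suc k) = I"
proof -
  interpret prob_space M by (rule P)
  interpret pair_sigma_finite lborel M by unfold_locales
  define w where "w = (\<lambda>x::real. real (Suc k) * x^k)"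
  define f where "f = (\<lambda>(x::real) \<omega>. ennreal (if 0 < x \<and> x < 1 \<and> x < Y \<omega> then w x else 0))"
  have fm: "case_prod f \<in> borel_measurable (lborel \<Otimes>\<^sub>M M)"
    unfolding f_def w_def by measurable
  have inner1: "(\<integral>\<^sup>+x. f x \<omega> \<partial>lborel) = ennreal (Y \<omega> ^ Suc k)" if "\<omega> \<in> space M" for \<omega>
  proof -
    have "(\<integral>\<^sup>+x. f x \<omega> \<partial>lborel) = (\<integral>\<^sup>+x. ennreal (w x) * indicator {0<..<Y \<omega>} x \<partial>lborel)"
      using rng[OF that] unfolding f_def by (intro nn_integral_cong) (auto simp: indicator_def)
    also have "\<dots> = ennreal (Y \<omega> ^ Suc k)"
      unfolding w_def using rng[OF that]
      by (intro nn_integral_has_integral_lebesgue' pow_integral) auto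
    finally show ?thesis .
  qed
  have inner2: "(\<integral>\<^sup>+\<omega>. f x \<omega> \<partial>M) = ennreal (w x * (1 - F x)) * indicator {0<..<1} x" for x
  proof (cases "0 < x \<and> x < 1")
    case True
    have "(\<integral>\<^sup>+\<omega>. f x \<omega> \<partial>M) = (\<integral>\<^sup>+\<omega>. ennreal (w x) * indicator {\<omega>\<in>space M. x < Y \<omega>} \<omega> \<partial>M)"
      using True unfolding f_def by (intro nn_integral_cong) (auto simp: indicator_def)
    also have "\<dots> = ennreal (w x) * emeasure M {\<omega>\<in>space M. x < Y \<omega>}"
      by (subst nn_integral_cmult_indicator) auto
    also have "emeasure M {\<omega>\<in>space M. x < Y \<omega>} = ennreal (1 - F x)"
    proof -
      have "{\<omega>\<in>space M. x < Y \<omega>} = space M - {\<omega>\<in>space M. Y \<omega> \<le> x}" by auto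
      then have "prob {\<omega>\<in>space M. x < Y \<omega>} = 1 - prob {\<omega>\<in>space M. Y \<omega> \<le> x}"
        by (simp add: prob_compl)
      then show ?thesis using cdf[of x] True by (simp add: emeasure_eq_measure)
    qed
    finally show ?thesis using True
      by (simp add: ennreal_mult' w_def)
  next
    case False
    then have "f x = (\<lambda>\<omega>. 0)" by (auto simp: f_def fun_eq_iff)
    then show ?thesis using False by simp
  qed
  have nonneg: "0 \<le> w x * (1 - F x)" if x: "x \<in> {0<..<1}" for x
  proof -
    have "F x \<le> 1" using cdf[of x] x prob_le_1[of "{\<omega>\<in>space M. Y \<omega> \<le> x}"] by auto
    then show "0 \<le> w x * (1 - F x)" using x unfolding w_def by auto
  qed
  have I0: "0 \<le> I"
    by (rule has_integral_nonneg[OF I]) (use nonneg in \<open>auto simp: w_def\<close>)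
  have nn: "(\<integral>\<^sup>+\<omega>. ennreal (Y \<omega> ^ Suc k) \<partial>M) = ennreal I"
  proof -
    have "(\<integral>\<^sup>+\<omega>. ennreal (Y \<omega> ^ Suc k) \<partial>M) = (\<integral>\<^sup>+\<omega>. (\<integral>\<^sup>+x. f x \<omega> \<partial>lborel) \<partial>M)"
      by (intro nn_integral_cong) (simp add: inner1)
    also have "\<dots> = (\<integral>\<^sup>+x. (\<integral>\<^sup>+\<omega>. f x \<omega> \<partial>M) \<partial>lborel)"
      by (rule Fubini'[OF fm])
    also have "\<dots> = (\<integral>\<^sup>+x. ennreal (w x * (1 - F x)) * indicator {0<..<1} x \<partial>lborel)"
      by (simp add: inner2)
    also have "\<dots> = ennreal I"
    proof (rule nn_integral_has_integral_lebesgue')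
      show "((\<lambda>x. w x * (1 - F x)) has_integral I) {0<..<1}" using I by (simp add: w_def)
    qed (rule nonneg)
    finally show ?thesis .
  qed
  have int: "integrable M (\<lambda>\<omega>. Y \<omega> ^ Suc k)"
  proof (rule integrable_const_bound[where B=1])
    show "AE \<omega> in M. norm (Y \<omega> ^ Suc k) \<le> 1"
    proof (intro AE_I2)
      fix \<omega> assume "\<omega> \<in> space M"
      then have a: "0 \<le> Y \<omega>" "Y \<omega> \<le> 1" using rng by auto
      have "0 \<le> Y \<omega> ^ Suc k" using a(1) by (rule zero_le_power)
      then have "norm (Y \<omega> ^ Suc k) = Y \<omega> ^ Suc k" unfolding real_norm_def by (rule abs_of_nonneg)
      also have "\<dots> \<le> 1" using a by (rule power_le_one)
      finally show "norm (Y \<omega> ^ Suc k) \<le> 1" .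
    qed
  qed simp
  have "(\<integral>\<^sup>+\<omega>. ennreal (Y \<omega> ^ Suc k) \<partial>M) = ennreal (expectation (\<lambda>\<omega>. Y \<omega> ^ Suc k))"
    using rng by (intro nn_integral_eq_integral int) (auto intro!: AE_I2)
  moreover have "0 \<le> expectation (\<lambda>\<omega>. Y \<omega> ^ Suc k)"
    using rng by (intro integral_nonneg_AE AE_I2) auto
  ultimately show ?thesis using nn I0 by simp
qed



lemma beta_moments:
  fixes Y :: "'a \<Rightarrow> real"
  assumes P: "prob_space M" and Ym: "Y \<in> borel_measurable M"
    and rng: "\<And>\<omega>. \<omega> \<in> space M \<Longrightarrow> 0 \<le> Y \<omega> \<and> Y \<omega> \<le> 1"
    and cdf: "\<And>x. 0 < x \<Longrightarrow> x < 1 \<Longrightarrow> measure M {\<omega>\<in>space M. Y \<omega> \<le> x} = binom_tail n lo x"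
    and lo: "lo \<le> n + 1"
  shows "prob_space.expectation M Y = real lo / (real n + 1)"
    and "prob_space.expectation M (\<lambda>\<omega>. Y \<omega> ^ 2) = real lo * (real lo + 1) / ((real n + 1) * (real n + 2))"
proof -
  have c1: "((\<lambda>x::real. 1::real) has_integral 1) {0<..<1}"
    using has_integral_const_real[of "1::real" 0 1] by (simp add: has_integral_Icc_iff_Ioo)
  have c2: "((\<lambda>x::real. 2 * x) has_integral 1) {0<..<1}"
    using pow_integral[of 1 1] by simp
  have "((\<lambda>x. real (Suc 0) * x^0 * (1 - binom_tail n lo x)) has_integral
          (1 - real (n + 1 - lo) / real (n+1))) {0<..<1}"
    using has_integral_diff[OF c1 int_tail0[of n lo]] by simp
  from moment_from_cdf[OF P Ym rng cdf this]
  have "prob_space.expectation M Y = 1 - real (n + 1 - lo) / real (n+1)" by simp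
  also have "\<dots> = real lo / (real n + 1)"
    using lo by (simp add: of_nat_diff field_simps)
  finally show "prob_space.expectation M Y = real lo / (real n + 1)" .
  have "((\<lambda>x. real (Suc 1) * x^1 * (1 - binom_tail n lo x)) has_integral
          (1 - 2 * ((real (n+1) * real (n+2) - real lo * real (lo+1)) / (2 * real (n+1) * real (n+2)))))
          {0<..<1}"
    using has_integral_diff[OF c2 has_integral_mult_right[OF int_tail1[OF lo], of 2]]
    by (simp add: algebra_simps)
  from moment_from_cdf[OF P Ym rng cdf this]
  have "prob_space.expectation M (\<lambda>\<omega>. Y \<omega> ^ 2) =
     1 - 2 * ((real (n+1) * real (n+2) - real lo * real (lo+1)) / (2 * real (n+1) * real (n+2)))"
    by (simp add: numeral_2_eq_2)
  also have "\<dots> = real lo * real (lo + 1) / (real (n+1) * real (n+2))"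
  proof -
    have gen: "X > 0 \<Longrightarrow> 1 - 2 * ((X - L) / (2 * X)) = L / X" for X L :: real
      by (simp add: field_simps)
    show ?thesis using gen[of "real (n+1) * real (n+2)" "real lo * real (lo+1)"]
      by (simp only: mult.assoc) (simp add: mult.assoc)
  qed
  also have "\<dots> = real lo * (real lo + 1) / ((real n + 1) * (real n + 2))"
    by (simp add: add.commute)
  finally show "prob_space.expectation M (\<lambda>\<omega>. Y \<omega> ^ 2) = real lo * (real lo + 1) / ((real n + 1) * (real n + 2))" .
qed

lemma mgf_bound:
  fixes Y :: "'a \<Rightarrow> real"
  assumes P: "prob_space M" and Ym[measurable]: "Y \<in> borel_measurable M"
    and rng: "\<And>\<omega>. \<omega> \<in> space M \<Longrightarrow> 0 \<le> Y \<omega> \<and> Y \<omega> \<le> 1"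
    and e1: "prob_space.expectation M Y = \<mu>"
    and e2: "prob_space.expectation M (\<lambda>\<omega>. Y \<omega> ^ 2) = m2"
    and a: "0 \<le> a" and l: "0 \<le> l" and aM: "a * (1 - \<mu>) \<le> Mb" and c0: "0 \<le> l * Mb" and c3: "l * Mb < 3"
  shows "(\<integral>\<^sup>+\<omega>. ennreal (exp (l * (a * (Y \<omega> - \<mu>)))) \<partial>M)
         \<le> ennreal (exp (l^2 * a^2 * (m2 - \<mu>^2) / (2 * (1 - l * Mb / 3))))"
proof -
  interpret prob_space M by (rule P)
  define D where "D = 2 * (1 - l * Mb / 3)"
  define K where "K = (l * a)^2 / D"
  have D: "D > 0" using c3 by (simp add: D_def mult.commute)
  define g where "g = (\<lambda>\<omega>. (1 - l * a * \<mu> + K * \<mu>^2) + (l * a - 2 * K * \<mu>) * Y \<omega> + K * Y \<omega> ^ 2)"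
  have pt: "exp (l * (a * (Y \<omega> - \<mu>))) \<le> g \<omega>" if "\<omega> \<in> space M" for \<omega>
  proof -
    have "l * (a * (Y \<omega> - \<mu>)) \<le> l * (a * (1 - \<mu>))"
      using rng[OF that] a l by (intro mult_left_mono) auto
    also have "\<dots> \<le> l * Mb" using aM l by (rule mult_left_mono)
    finally have u: "l * (a * (Y \<omega> - \<mu>)) \<le> l * Mb" .
    have "exp (l * (a * (Y \<omega> - \<mu>))) \<le> 1 + l * (a * (Y \<omega> - \<mu>)) + (l * (a * (Y \<omega> - \<mu>)))^2 / D"
      using exp_le_quad[OF u c0 c3] by (simp add: D_def)
    also have "\<dots> = g \<omega>" unfolding g_def K_def using D by (simp add: field_simps power2_eq_square)
    finally show ?thesis .
  qed
  have iY: "integrable M Y"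
    by (rule integrable_const_bound[where B=1]) (use rng in \<open>auto intro!: AE_I2\<close>)
  have iY2: "integrable M (\<lambda>\<omega>. Y \<omega> ^ 2)"
  proof (rule integrable_const_bound[where B=1])
    show "AE \<omega> in M. norm (Y \<omega> ^ 2) \<le> 1"
    proof (intro AE_I2)
      fix \<omega> assume "\<omega> \<in> space M"
      then have b: "0 \<le> Y \<omega>" "Y \<omega> \<le> 1" using rng by auto
      have "Y \<omega> * Y \<omega> \<le> 1 * 1" using b by (intro mult_mono) auto
      then show "norm (Y \<omega> ^ 2) \<le> 1" by (simp add: power2_eq_square)
    qed
  qed simp
  have ig: "integrable M g" unfolding g_def using iY iY2 by auto
  have Eg: "expectation g = 1 + K * (m2 - \<mu>^2)"
    unfolding g_def using iY iY2 e1 e2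
    by (simp add: power2_eq_square algebra_simps prob_space)
  have "(\<integral>\<^sup>+\<omega>. ennreal (exp (l * (a * (Y \<omega> - \<mu>)))) \<partial>M) \<le> (\<integral>\<^sup>+\<omega>. ennreal (g \<omega>) \<partial>M)"
    using pt by (intro nn_integral_mono ennreal_leI) auto
  also have "\<dots> = ennreal (expectation g)"
    using pt by (intro nn_integral_eq_integral ig AE_I2) (meson exp_ge_zero order_trans)
  also have "\<dots> \<le> ennreal (exp (K * (m2 - \<mu>^2)))"
    unfolding Eg by (intro ennreal_leI) (metis add.commute exp_ge_add_one_self)
  also have "K * (m2 - \<mu>^2) = l^2 * a^2 * (m2 - \<mu>^2) / (2 * (1 - l * Mb / 3))"
    unfolding K_def D_def by (simp add: power_mult_distrib)
  finally show ?thesis .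
qed


lemma sum_pairs: "(\<Sum>p\<in>A\<times>{0::nat,1}. f p) = (\<Sum>i\<in>A. f (i,0) + f (i,1))"
proof -
  have "(\<Sum>p\<in>A\<times>{0::nat,1}. f p) = (\<Sum>(i,j)\<in>A\<times>{0::nat,1}. f (i,j))" by simp
  also have "\<dots> = (\<Sum>i\<in>A. \<Sum>j\<in>{0::nat,1}. f (i,j))" by (rule sum.cartesian_product[symmetric])
  finally show ?thesis by simp
qed
lemma fa2: "\<sigma> > 0 \<Longrightarrow> Mb \<ge> 0 \<Longrightarrow> t > 0 \<Longrightarrow> (t*\<sigma>)^2/(2*(\<sigma>^2 + Mb*(t*\<sigma>)/3)) = t^2/(2 + 2*Mb/(3*\<sigma>)*t)" for Mb t \<sigma> :: real
proof -
  assume a: "\<sigma> > 0" "Mb \<ge> 0" "t > 0"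
  define Q where "Q = 3*\<sigma> + Mb*t"
  have p: "Q > 0" using a by (simp add: add_pos_nonneg Q_def)
  have e1: "\<sigma>^2 + Mb*(t*\<sigma>)/3 = \<sigma>*Q/3" by (simp add: Q_def algebra_simps power2_eq_square)
  have e2: "2 + 2*Mb/(3*\<sigma>)*t = 2*Q/(3*\<sigma>)" using a by (simp add: Q_def field_simps)
  have g: "(t*\<sigma>)^2/(2*(\<sigma>*Q/3)) = t^2/(2*Q/(3*\<sigma>))"
    using a p by (simp add: field_simps power2_eq_square)
  show ?thesis unfolding e1 e2 g ..
qed

lemma final_alg:
  fixes \<sigma> Mb t :: real
  assumes "\<sigma> > 0" "Mb \<ge> 0" "t > 0"
  defines "sv \<equiv> t * \<sigma>"
  defines "lv \<equiv> sv / (\<sigma>^2 + Mb * sv / 3)"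
  shows "lv > 0" "lv * Mb < 3" "0 \<le> lv * Mb"
    "(- (lv * sv)) + lv^2*\<sigma>^2/(2*(1 - lv*Mb/3)) = -(t^2/(2 + 2*Mb/(3*\<sigma>)*t))"
proof -
  have sv: "sv > 0" using assms by (simp add: sv_def)
  have d: "\<sigma>^2 + Mb * sv / 3 > 0" using assms sv by (intro add_pos_nonneg) auto
  show lv: "lv > 0" using sv d by (simp add: lv_def)
  have "lv * Mb * 3 < 3 * 3" unfolding lv_def using d sv assms
    by (simp add: field_simps)
  then show lm: "lv * Mb < 3" by (simp add: mult.commute)
  show "0 \<le> lv * Mb" using lv assms by simp
  have e1: "1 - lv*Mb/3 = \<sigma>^2 / (\<sigma>^2 + Mb * sv / 3)" unfolding lv_def using d by (simp add: field_simps)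
  have "(- (lv * sv)) + lv^2*\<sigma>^2/(2*(1 - lv*Mb/3)) = -(sv^2 / (2 * (\<sigma>^2 + Mb * sv / 3)))"
  proof -
    have gen: "D > 0 \<Longrightarrow> V > 0 \<Longrightarrow> (- (s / D * s)) + (s/D)^2*V/(2*(V/D)) = -(s^2/(2*D))" for D V s :: real
      by (simp add: field_simps power2_eq_square)
    show ?thesis unfolding e1 unfolding lv_def using gen[OF d, of "\<sigma>^2" sv] assms by simp
  qed
  also have "\<dots> = -(t^2/(2 + 2*Mb/(3*\<sigma>)*t))"
    unfolding sv_def using fa2[of \<sigma> Mb t] assms by simp
  finally show "(- (lv * sv)) + lv^2*\<sigma>^2/(2*(1 - lv*Mb/3)) = -(t^2/(2 + 2*Mb/(3*\<sigma>)*t))" .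
qed
lemma mom_alg:
  fixes N L :: real assumes "N \<ge> 0"
  shows "L*(L+1)/((N+1)*(N+2)) = (N+1-L)*L/((N+1)^2*(N+2)) + (L/(N+1))^2"
proof -
  have g: "P \<noteq> 0 \<Longrightarrow> P + 1 \<noteq> 0 \<Longrightarrow> L*(L+1)/(P*(P+1)) = (P-L)*L/(P^2*(P+1)) + (L/P)^2" for P :: real
  proof -
    assume a: "P \<noteq> 0" "P + 1 \<noteq> 0"
    have "(P-L)*L/(P^2*(P+1)) + (L/P)^2 = ((P-L)*L + L^2*(P+1))/(P^2*(P+1))"
      using a by (simp add: power2_eq_square add_divide_distrib)
    also have "(P-L)*L + L^2*(P+1) = P * (L*(L+1))" by (simp add: algebra_simps power2_eq_square)
    also have "P * (L*(L+1)) / (P^2*(P+1)) = L*(L+1)/(P*(P+1))"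
      using a by (simp add: power2_eq_square)
    finally show ?thesis by simp
  qed
  have "N+1 \<noteq> 0" "N+1+1 \<noteq> 0" using assms by auto
  from g[OF this] show ?thesis by (simp add: add.assoc)
qed


theorem theorem3:
  fixes M :: "'a measure"
    and y :: "nat \<Rightarrow> nat \<Rightarrow> 'a \<Rightarrow> real"
    and C :: "'a \<Rightarrow> real"
    and A \<beta> \<pi>0 \<pi>1 t :: real
    and nte n0 n1 k0 k1 :: nat
  assumes "prob_space M"
    and "A > 0" and "0 < \<beta>" and "\<beta> < 1"
    and "0 \<le> \<pi>0" and "\<pi>0 \<le> 1" and "0 \<le> \<pi>1" and "\<pi>1 \<le> 1"
    and "nte \<ge> 1" and "n0 \<ge> 1" and "n1 \<ge> 1" and "k0 \<le> n0" and "k1 \<le> n1"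
    and indep: "prob_space.indep_vars M (\<lambda>_. borel) (\<lambda>(i, j). y i j) ({1..nte} \<times> {0, 1})"
    and range: "\<And>i j \<omega>. i \<in> {1..nte} \<Longrightarrow> j \<in> {0, 1} \<Longrightarrow> \<omega> \<in> space M \<Longrightarrow>
                  0 \<le> y i j \<omega> \<and> y i j \<omega> \<le> 1"
    and cdf0: "\<And>i x. i \<in> {1..nte} \<Longrightarrow> 0 < x \<Longrightarrow> x < 1 \<Longrightarrow>
                  measure M {\<omega> \<in> space M. y i 0 \<omega> \<le> x} = binom_tail n0 (n0 - k0 + 1) x"
    and cdf1: "\<And>i x. i \<in> {1..nte} \<Longrightarrow> 0 < x \<Longrightarrow> x < 1 \<Longrightarrow>
                  measure M {\<omega> \<in> space M. y i 1 \<omega> \<le> x} = binom_tail n1 (k1 + 1) x"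
    and C_meas: "C \<in> borel_measurable M"
    and C_bound: "AE \<omega> in M. C \<omega> \<le> A * (\<Sum>i=1..nte. \<beta> * \<pi>0 * y i 0 \<omega> + \<pi>1 * y i 1 \<omega>)"
    and sigma_pos: "thors_sigma2 nte A \<beta> \<pi>0 \<pi>1 n0 n1 k0 k1 > 0"
    and "t > 0"
  shows "measure M {\<omega> \<in> space M.
            C \<omega> \<le> thors_Cstar nte A \<beta> \<pi>0 \<pi>1 n0 n1 k0 k1
                   + t * sqrt (thors_sigma2 nte A \<beta> \<pi>0 \<pi>1 n0 n1 k0 k1)}
         \<ge> 1 - exp (- (t\<^sup>2 / (2 + 2 * thors_M A \<beta> \<pi>0 \<pi>1 n0 n1 k0 k1
                         / (3 * sqrt (thors_sigma2 nte A \<beta> \<pi>0 \<pi>1 n0 n1 k0 k1)) * t)))"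
proof -
  interpret prob_space M by (rule assms(1))
  define \<sigma>2 where "\<sigma>2 = thors_sigma2 nte A \<beta> \<pi>0 \<pi>1 n0 n1 k0 k1"
  define \<sigma> where "\<sigma> = sqrt \<sigma>2"
  define Mb where "Mb = thors_M A \<beta> \<pi>0 \<pi>1 n0 n1 k0 k1"
  define Cs where "Cs = thors_Cstar nte A \<beta> \<pi>0 \<pi>1 n0 n1 k0 k1"
  define I where "I = {1..nte} \<times> {0::nat, 1}"
  define yy where "yy = (\<lambda>(i, j). y i j)"
  define \<mu>0 where "\<mu>0 = (real n0 - real k0 + 1) / (real n0 + 1)"
  define \<mu>1 where "\<mu>1 = (real k1 + 1) / (real n1 + 1)"
  define v0 where "v0 = real k0 * (real n0 - real k0 + 1) / ((real n0 + 1)^2 * (real n0 + 2))"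
  define v1 where "v1 = (real k1 + 1) * (real n1 - real k1) / ((real n1 + 1)^2 * (real n1 + 2))"
  define a where "a = (\<lambda>p::nat\<times>nat. if snd p = 0 then \<beta> * \<pi>0 * A else \<pi>1 * A)"
  define mu where "mu = (\<lambda>p::nat\<times>nat. if snd p = 0 then \<mu>0 else \<mu>1)"
  define v where "v = (\<lambda>p::nat\<times>nat. if snd p = 0 then v0 else v1)"
  define Z where "Z = (\<lambda>p \<omega>. a p * (yy p \<omega> - mu p))"
  define S where "S = (\<lambda>\<omega>. \<Sum>p\<in>I. Z p \<omega>)"

  have finI: "finite I" by (simp add: I_def)
  have indep': "indep_vars (\<lambda>_. borel) yy I" using indep by (simp add: I_def yy_def)
  have meas[measurable]: "yy p \<in> borel_measurable M" if "p \<in> I" for p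
    using indep' that unfolding indep_vars_def by auto
  have Sm[measurable]: "S \<in> borel_measurable M"
    unfolding S_def Z_def by measurable
  have rng: "0 \<le> yy p \<omega> \<and> yy p \<omega> \<le> 1" if "p \<in> I" "\<omega> \<in> space M" for p \<omega>
    using range that by (auto simp: I_def yy_def)
  have mom: "expectation (yy p) = mu p \<and> expectation (\<lambda>\<omega>. yy p \<omega> ^ 2) = v p + (mu p)^2"
    if pI: "p \<in> I" for p
  proof -
    obtain i j where p: "p = (i,j)" "i \<in> {1..nte}" "j \<in> {0,1}" using pI by (auto simp: I_def)
    have Ym: "y i j \<in> borel_measurable M" using meas[OF pI] by (simp add: p yy_def)
    have rg: "\<And>\<omega>. \<omega> \<in> space M \<Longrightarrow> 0 \<le> y i j \<omega> \<and> y i j \<omega> \<le> 1" using range p by auto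
    show ?thesis
    proof (cases "j = 0")
      case True
      have lo: "n0 - k0 + 1 \<le> n0 + 1" by simp
      have Ym0: "y i 0 \<in> borel_measurable M" using Ym True by simp
      have rg0: "\<And>\<omega>. \<omega> \<in> space M \<Longrightarrow> 0 \<le> y i 0 \<omega> \<and> y i 0 \<omega> \<le> 1" using rg True by simp
      note bm = beta_moments[OF assms(1) Ym0 rg0 cdf0[OF p(2)] lo]
      have L: "real (n0 - k0 + 1) = real n0 - real k0 + 1" using assms(12) by (simp add: of_nat_diff)
      have "real n0 + 1 - (real n0 - real k0 + 1) = real k0" by simp
      then have "(real n0 - real k0 + 1) * (real n0 - real k0 + 1 + 1) / ((real n0 + 1) * (real n0 + 2))
          = v0 + \<mu>0^2"
        using mom_alg[of "real n0" "real n0 - real k0 + 1"] by (simp add: v0_def \<mu>0_def)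
      then show ?thesis using bm True p unfolding L by (simp add: yy_def mu_def v_def \<mu>0_def)
    next
      case False
      then have j: "j = 1" using p by auto
      have lo: "k1 + 1 \<le> n1 + 1" using assms(13) by simp
      have Ym1: "y i 1 \<in> borel_measurable M" using Ym j by simp
      have rg1: "\<And>\<omega>. \<omega> \<in> space M \<Longrightarrow> 0 \<le> y i 1 \<omega> \<and> y i 1 \<omega> \<le> 1" using rg j by simp
      note bm = beta_moments[OF assms(1) Ym1 rg1 cdf1[OF p(2)] lo]
      have "real n1 + 1 - (real k1 + 1) = real n1 - real k1" by simp
      then have "(real k1 + 1) * (real k1 + 1 + 1) / ((real n1 + 1) * (real n1 + 2))
          = v1 + \<mu>1^2"
        using mom_alg[of "real n1" "real k1 + 1"] by (simp add: v1_def \<mu>1_def mult.commute)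
      then show ?thesis using bm j p by (simp add: yy_def mu_def v_def \<mu>1_def add.commute)
    qed
  qed
  have a0: "0 \<le> a p" for p unfolding a_def using assms by auto
  have mx: "0 \<le> max x (1 - x)" for x :: real by auto
  have Mb0: "0 \<le> Mb" unfolding Mb_def thors_M_def
    using assms mx by (intro max.coboundedI1 mult_nonneg_nonneg) auto
  have aM: "a p * (1 - mu p) \<le> Mb" for p
  proof (cases "snd p = 0")
    case True
    have "\<beta> * \<pi>0 * A * (1 - \<mu>0) \<le> \<beta> * \<pi>0 * A * max \<mu>0 (1 - \<mu>0)"
      using assms by (intro mult_left_mono) auto
    also have "\<dots> \<le> Mb" unfolding Mb_def thors_M_def \<mu>0_def by simp
    finally show ?thesis using True by (simp add: a_def mu_def)
  next
    case False
    have "\<pi>1 * A * (1 - \<mu>1) \<le> \<pi>1 * A * max \<mu>1 (1 - \<mu>1)"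
      using assms by (intro mult_left_mono) auto
    also have "\<dots> \<le> Mb" unfolding Mb_def thors_M_def \<mu>1_def by simp
    finally show ?thesis using False by (simp add: a_def mu_def)
  qed
  have s2: "\<sigma>2 > 0" using sigma_pos by (simp add: \<sigma>2_def)
  have sg: "\<sigma> > 0" using s2 by (simp add: \<sigma>_def)
  have sq: "\<sigma>^2 = \<sigma>2" using s2 by (simp add: \<sigma>_def)
  define sv where "sv = t * \<sigma>"
  define l where "l = sv / (\<sigma>^2 + Mb * sv / 3)"
  note fa = final_alg[OF sg Mb0 \<open>t > 0\<close>, folded sv_def, folded l_def]
  have l0: "0 \<le> l" using fa(1) by simp

  have Ssum: "A * (\<Sum>i=1..nte. \<beta> * \<pi>0 * y i 0 \<omega> + \<pi>1 * y i 1 \<omega>) = S \<omega> + Cs" for \<omega>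
  proof -
    have "S \<omega> = (\<Sum>i\<in>{1..nte}. A * (\<beta> * \<pi>0 * y i 0 \<omega> + \<pi>1 * y i 1 \<omega>) - A * (\<beta> * \<pi>0 * \<mu>0 + \<pi>1 * \<mu>1))"
      unfolding S_def I_def sum_pairs
      by (intro sum.cong refl) (simp add: Z_def a_def mu_def yy_def algebra_simps)
    also have "\<dots> = A * (\<Sum>i=1..nte. \<beta> * \<pi>0 * y i 0 \<omega> + \<pi>1 * y i 1 \<omega>) - Cs"
      by (simp add: sum_subtractf sum_distrib_left Cs_def thors_Cstar_def \<mu>0_def \<mu>1_def)
    finally show ?thesis by simp
  qed
  have Vsum: "(\<Sum>p\<in>I. (a p)^2 * v p) = \<sigma>2"
    unfolding I_def sum_pairs
    by (simp add: a_def v_def v0_def v1_def \<sigma>2_def thors_sigma2_def power_mult_distrib algebra_simps)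

  have ch: "emeasure M {x\<in>space M. S x \<ge> sv} \<le>
      ennreal (exp (-l * sv)) * (\<integral>\<^sup>+x. ennreal (exp (l * S x)) * indicator (space M) x \<partial>M)"
    by (rule Chernoff_ineq_nn_integral_ge) (use fa(1) in auto)
  have indZ: "indep_vars (\<lambda>_. borel) (\<lambda>p x. ennreal (exp (l * Z p x))) I"
  proof -
    have "indep_vars (\<lambda>_. borel) (\<lambda>p x. (\<lambda>z. ennreal (exp (l * (a p * (z - mu p))))) (yy p x)) I"
      by (rule indep_vars_compose2[OF indep']) auto
    then show ?thesis by (simp add: Z_def)
  qed
  have "(\<integral>\<^sup>+x. ennreal (exp (l * S x)) * indicator (space M) x \<partial>M) =
        (\<integral>\<^sup>+x. (\<Prod>p\<in>I. ennreal (exp (l * Z p x))) \<partial>M)"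
    by (intro nn_integral_cong) (simp add: S_def sum_distrib_left exp_sum finI prod_ennreal)
  also have "\<dots> = (\<Prod>p\<in>I. \<integral>\<^sup>+x. ennreal (exp (l * Z p x)) \<partial>M)"
    by (rule indep_vars_nn_integral[OF finI indZ]) simp
  also have "\<dots> \<le> (\<Prod>p\<in>I. ennreal (exp (l^2 * (a p)^2 * v p / (2 * (1 - l * Mb / 3)))))"
  proof (rule prod_mono_ennreal)
    fix p assume pI: "p \<in> I"
    have "(\<integral>\<^sup>+\<omega>. ennreal (exp (l * (a p * (yy p \<omega> - mu p)))) \<partial>M)
         \<le> ennreal (exp (l^2 * (a p)^2 * ((v p + (mu p)^2) - (mu p)^2) / (2 * (1 - l * Mb / 3))))"
      by (rule mgf_bound[OF assms(1) meas[OF pI] rng[OF pI] conjunct1[OF mom[OF pI]] conjunct2[OF mom[OF pI]]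
            a0 l0 aM fa(3) fa(2)])
    then show "(\<integral>\<^sup>+x. ennreal (exp (l * Z p x)) \<partial>M) \<le> ennreal (exp (l^2 * (a p)^2 * v p / (2 * (1 - l * Mb / 3))))"
      by (simp add: Z_def)
  qed
  also have "\<dots> = ennreal (exp (l^2 * \<sigma>2 / (2 * (1 - l * Mb / 3))))"
    by (simp add: prod_ennreal exp_sum[OF finI, symmetric] sum_divide_distrib[symmetric]
         sum_distrib_left[symmetric] Vsum mult.assoc)
  finally have mgf: "(\<integral>\<^sup>+x. ennreal (exp (l * S x)) * indicator (space M) x \<partial>M)
                  \<le> ennreal (exp (l^2 * \<sigma>2 / (2 * (1 - l * Mb / 3))))" .
  have "emeasure M {x\<in>space M. S x \<ge> sv} \<le> ennreal (exp (-l * sv)) * ennreal (exp (l^2 * \<sigma>2 / (2 * (1 - l * Mb / 3))))"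
    using ch mgf by (meson mult_left_mono order_trans zero_le)
  also have "\<dots> = ennreal (exp (- (t\<^sup>2 / (2 + 2 * Mb / (3 * \<sigma>) * t))))"
    using fa(4) by (simp add: ennreal_mult'[symmetric] exp_add[symmetric] sq)
  finally have tail: "prob {x\<in>space M. S x \<ge> sv} \<le> exp (- (t\<^sup>2 / (2 + 2 * Mb / (3 * \<sigma>) * t)))"
    by (simp add: emeasure_eq_measure)
  have eq: "prob {x\<in>space M. S x < sv} = 1 - prob {x\<in>space M. S x \<ge> sv}"
  proof -
    have "{x\<in>space M. S x < sv} = space M - {x\<in>space M. S x \<ge> sv}" by auto
    then show ?thesis by (simp add: prob_compl)
  qed
  have mono: "prob {x\<in>space M. S x < sv} \<le> prob {\<omega> \<in> space M. C \<omega> \<le> Cs + t * \<sigma>}"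
  proof (rule finite_measure_mono_AE)
    show "AE x in M. x \<in> {x\<in>space M. S x < sv} \<longrightarrow> x \<in> {\<omega> \<in> space M. C \<omega> \<le> Cs + t * \<sigma>}"
      using C_bound
    proof eventually_elim
      case (elim x)
      then show ?case using Ssum[of x] unfolding sv_def by auto
    qed
    show "{\<omega> \<in> space M. C \<omega> \<le> Cs + t * \<sigma>} \<in> sets M" using C_meas by measurable
  qed
  have "1 - exp (- (t\<^sup>2 / (2 + 2 * Mb / (3 * \<sigma>) * t))) \<le> prob {\<omega> \<in> space M. C \<omega> \<le> Cs + t * \<sigma>}"
    using eq mono tail by linarith
  then show ?thesis unfolding Cs_def \<sigma>_def \<sigma>2_def Mb_def .
qed

end
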